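(* Let $k$ be a positive integer and $G$ a finite graph. (1) If $(A,B)$ is a separation of $G$ with $\theta(G[A\cap B])=k$, then $(\widetilde{A},\widetilde{B})$ is a separation of $\widetilde{G}$ with $|\widetilde{A}\cap\widetilde{B}|\le k\cdot\widetilde{\omega}(G)$. (2) If $(X,Y)$ is a separation of $\widetilde{G}$ with $|X\cap Y|=k$, then $(\bigcup X,\bigcup Y)$ is a separation of $G$ with $\theta(G[\bigcup X\cap\bigcup Y])\le k$.
   Context: Two vertices of $G$ are equivalent if they lie in exactly the same maximal cliques of $G$. The clique-quotient graph $\widetilde{G}$ has the equivalence classes as vertices, two distinct classes adjacent iff their representatives are adjacent in $G$. For $A\subseteq V(G)$, $\widetilde{A}$ is the set of equivalence classes containing an element of $A$; for a set $X$ of classes, $\bigcup X$ is the set of all vertices of $G$ lying in a class of $X$. A separation of a graph $H$ is a pair $(A,B)$ of subsets of $V(H)$ with no edge between $A\setminus B$ and $B\setminus A$. $\theta$ is the clique-cover number, and $\widetilde{\omega}(G)$ is the maximum over maximal cliques $K$ of $G$ of the number of equivalence classes meeting $K$. *)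

theory Defs
  imports Main
begin

definition graph :: "'a set \<Rightarrow> ('a \<Rightarrow> 'a \<Rightarrow> bool) \<Rightarrow> bool" where
  "graph V E \<longleftrightarrow> finite V \<and> (\<forall>x y. E x y \<longrightarrow> x \<in> V \<and> y \<in> V)
     \<and> (\<forall>x y. E x y \<longrightarrow> E y x) \<and> (\<forall>x. \<not> E x x)"

definition clique :: "'a set \<Rightarrow> ('a \<Rightarrow> 'a \<Rightarrow> bool) \<Rightarrow> 'a set \<Rightarrow> bool" where
  "clique V E K \<longleftrightarrow> K \<subseteq> V \<and> (\<forall>x\<in>K. \<forall>y\<in>K. x \<noteq> y \<longrightarrow> E x y)"

definition max_clique :: "'a set \<Rightarrow> ('a \<Rightarrow> 'a \<Rightarrow> bool) \<Rightarrow> 'a set \<Rightarrow> bool" where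
  "max_clique V E K \<longleftrightarrow> clique V E K \<and> (\<forall>K'. clique V E K' \<and> K \<subseteq> K' \<longrightarrow> K' = K)"

definition cq_equiv :: "'a set \<Rightarrow> ('a \<Rightarrow> 'a \<Rightarrow> bool) \<Rightarrow> 'a \<Rightarrow> 'a \<Rightarrow> bool" where
  "cq_equiv V E u v \<longleftrightarrow> u \<in> V \<and> v \<in> V \<and>
     (\<forall>K. max_clique V E K \<longrightarrow> (u \<in> K \<longleftrightarrow> v \<in> K))"

definition cq_class :: "'a set \<Rightarrow> ('a \<Rightarrow> 'a \<Rightarrow> bool) \<Rightarrow> 'a \<Rightarrow> 'a set" where
  "cq_class V E v = {u. cq_equiv V E v u}"

definition cq_V :: "'a set \<Rightarrow> ('a \<Rightarrow> 'a \<Rightarrow> bool) \<Rightarrow> 'a set set" where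
  "cq_V V E = cq_class V E ` V"

definition cq_E :: "'a set \<Rightarrow> ('a \<Rightarrow> 'a \<Rightarrow> bool) \<Rightarrow> 'a set \<Rightarrow> 'a set \<Rightarrow> bool" where
  "cq_E V E X Y \<longleftrightarrow> X \<in> cq_V V E \<and> Y \<in> cq_V V E \<and> X \<noteq> Y \<and>
     (\<exists>x\<in>X. \<exists>y\<in>Y. E x y)"

definition cq_tilde :: "'a set \<Rightarrow> ('a \<Rightarrow> 'a \<Rightarrow> bool) \<Rightarrow> 'a set \<Rightarrow> 'a set set" where
  "cq_tilde V E A = {X \<in> cq_V V E. X \<inter> A \<noteq> {}}"

definition separation :: "'b set \<Rightarrow> ('b \<Rightarrow> 'b \<Rightarrow> bool) \<Rightarrow> 'b set \<Rightarrow> 'b set \<Rightarrow> bool" where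
  "separation W F A B \<longleftrightarrow> A \<subseteq> W \<and> B \<subseteq> W \<and>
     (\<forall>x\<in>A - B. \<forall>y\<in>B - A. \<not> F x y)"

definition theta :: "'a set \<Rightarrow> ('a \<Rightarrow> 'a \<Rightarrow> bool) \<Rightarrow> 'a set \<Rightarrow> nat" where
  "theta V E S = (LEAST n. \<exists>C. finite C \<and> card C = n \<and>
      (\<forall>K\<in>C. clique V E K \<and> K \<subseteq> S) \<and> \<Union>C = S)"

definition omega_tilde :: "'a set \<Rightarrow> ('a \<Rightarrow> 'a \<Rightarrow> bool) \<Rightarrow> nat" where
  "omega_tilde V E = Max {card {X \<in> cq_V V E. X \<inter> K \<noteq> {}} | K. max_clique V E K}"

end

theory Submission
  imports Defs
begin

lemma ex_max_clique:
  assumes g: "graph V E" and c: "clique V E C"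
  shows "\<exists>K. max_clique V E K \<and> C \<subseteq> K"
proof -
  let ?S = "{K. clique V E K \<and> C \<subseteq> K}"
  have "?S \<subseteq> Pow V" by (auto simp: clique_def)
  moreover have "finite V" using g by (simp add: graph_def)
  ultimately have f: "finite ?S" by (meson finite_Pow_iff finite_subset)
  have "?S \<noteq> {}" using c by auto
  from finite_has_maximal[OF f this] obtain m where m: "m \<in> ?S"
    and mx: "\<forall>b\<in>?S. m \<le> b \<longrightarrow> m = b" by blast
  have "max_clique V E m" unfolding max_clique_def using m mx by auto
  thus ?thesis using m by auto
qed

lemma vert_in_max:
  assumes g: "graph V E" and "v \<in> V"
  shows "\<exists>K. max_clique V E K \<and> v \<in> K"
  using ex_max_clique[OF g, of "{v}"] assms by (auto simp: clique_def)

lemma edge_in_max: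
  assumes g: "graph V E" and "E x y"
  shows "\<exists>K. max_clique V E K \<and> x \<in> K \<and> y \<in> K"
proof -
  have "clique V E {x,y}" using g assms unfolding clique_def graph_def by auto
  thus ?thesis using ex_max_clique[OF g] by blast
qed

lemma equiv_adj:
  assumes g: "graph V E" and "cq_equiv V E u w" and "u \<noteq> w"
  shows "E u w"
proof -
  have "u \<in> V" using assms by (simp add: cq_equiv_def)
  then obtain K where K: "max_clique V E K" "u \<in> K" using vert_in_max[OF g] by blast
  hence "w \<in> K" using assms(2) by (auto simp: cq_equiv_def)
  thus ?thesis using K assms(3) by (auto simp: max_clique_def clique_def)
qed

lemma class_self: "v \<in> V \<Longrightarrow> v \<in> cq_class V E v"
  by (simp add: cq_class_def cq_equiv_def)

lemma class_sub: "cq_class V E v \<subseteq> V"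
  by (auto simp: cq_class_def cq_equiv_def)

lemma class_eq: "u \<in> cq_class V E v \<Longrightarrow> cq_class V E u = cq_class V E v"
  by (auto simp: cq_class_def cq_equiv_def)

lemma class_clique:
  assumes g: "graph V E"
  shows "clique V E (cq_class V E v)"
  unfolding clique_def
proof (intro conjI ballI impI)
  show "cq_class V E v \<subseteq> V" by (rule class_sub)
  fix x y assume "x \<in> cq_class V E v" "y \<in> cq_class V E v" "x \<noteq> y"
  hence "cq_equiv V E x y" by (auto simp: cq_class_def cq_equiv_def)
  thus "E x y" using equiv_adj[OF g] \<open>x \<noteq> y\<close> by blast
qed

lemma class_equiv_mem: "u \<in> cq_class V E v \<Longrightarrow> w \<in> cq_class V E v \<Longrightarrow> cq_equiv V E u w"
  by (auto simp: cq_class_def cq_equiv_def)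

lemma theta_cover:
  assumes g: "graph V E" and S: "S \<subseteq> V"
  shows "\<exists>C. finite C \<and> card C = theta V E S \<and> (\<forall>K\<in>C. clique V E K \<and> K \<subseteq> S) \<and> \<Union>C = S"
proof -
  have fS: "finite S" using g S finite_subset by (auto simp: graph_def)
  have "\<exists>C. finite C \<and> card C = card ((\<lambda>v. {v}) ` S) \<and> (\<forall>K\<in>C. clique V E K \<and> K \<subseteq> S) \<and> \<Union>C = S"
    by (rule exI[of _ "(\<lambda>v. {v}) ` S"]) (use fS S in \<open>auto simp: clique_def\<close>)
  then obtain C0 where "finite C0 \<and> card C0 = card ((\<lambda>v. {v}) ` S) \<and> (\<forall>K\<in>C0. clique V E K \<and> K \<subseteq> S) \<and> \<Union>C0 = S" by blast
  hence "\<exists>C. finite C \<and> card C = card C0 \<and> (\<forall>K\<in>C. clique V E K \<and> K \<subseteq> S) \<and> \<Union>C = S" by blast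
  thus ?thesis unfolding theta_def by (rule LeastI)
qed

theorem lemma4p1:
  fixes V :: "'a set" and E :: "'a \<Rightarrow> 'a \<Rightarrow> bool" and k :: nat
  assumes "graph V E" and "k > 0"
  shows "(\<forall>A B. separation V E A B \<and> theta V E (A \<inter> B) = k \<longrightarrow>
            separation (cq_V V E) (cq_E V E) (cq_tilde V E A) (cq_tilde V E B) \<and>
            card (cq_tilde V E A \<inter> cq_tilde V E B) \<le> k * omega_tilde V E)
       \<and> (\<forall>X Y. separation (cq_V V E) (cq_E V E) X Y \<and> card (X \<inter> Y) = k \<longrightarrow>
            separation V E (\<Union>X) (\<Union>Y) \<and> theta V E (\<Union>X \<inter> \<Union>Y) \<le> k)"
proof (intro conjI allI impI)
  have g: "graph V E" by fact
  have fV: "finite V" using g by (simp add: graph_def)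
  have fcq: "finite (cq_V V E)" using fV by (simp add: cq_V_def)
  fix A B assume h: "separation V E A B \<and> theta V E (A \<inter> B) = k"
  have AV: "A \<subseteq> V" and BV: "B \<subseteq> V" and sep: "\<forall>x\<in>A - B. \<forall>y\<in>B - A. \<not> E x y"
    using h by (auto simp: separation_def)
  show "separation (cq_V V E) (cq_E V E) (cq_tilde V E A) (cq_tilde V E B)"
    unfolding separation_def
  proof (intro conjI ballI)
    show "cq_tilde V E A \<subseteq> cq_V V E" "cq_tilde V E B \<subseteq> cq_V V E" by (auto simp: cq_tilde_def)
    fix P Q assume P: "P \<in> cq_tilde V E A - cq_tilde V E B" and Q: "Q \<in> cq_tilde V E B - cq_tilde V E A"
    show "\<not> cq_E V E P Q"
    proof
      assume e: "cq_E V E P Q"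
      then obtain x y where xy: "x \<in> P" "y \<in> Q" "E x y" by (auto simp: cq_E_def)
      obtain p where p: "p \<in> V" "P = cq_class V E p" using P by (auto simp: cq_tilde_def cq_V_def)
      obtain q where q: "q \<in> V" "Q = cq_class V E q" using Q by (auto simp: cq_tilde_def cq_V_def)
      obtain a where a: "a \<in> P" "a \<in> A" "a \<notin> B" using P by (auto simp: cq_tilde_def)
      obtain b where b: "b \<in> Q" "b \<in> B" "b \<notin> A" using Q by (auto simp: cq_tilde_def)
      obtain K where K: "max_clique V E K" "x \<in> K" "y \<in> K" using edge_in_max[OF g xy(3)] by blast
      have "cq_equiv V E x a" using class_equiv_mem xy a p by metis
      hence "a \<in> K" using K by (auto simp: cq_equiv_def)
      have "cq_equiv V E y b" using class_equiv_mem xy b q by metis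
      hence "b \<in> K" using K by (auto simp: cq_equiv_def)
      have "a \<noteq> b" using a b by auto
      hence "E a b" using \<open>a \<in> K\<close> \<open>b \<in> K\<close> K by (auto simp: max_clique_def clique_def)
      thus False using sep a b by auto
    qed
  qed
  have ABV: "A \<inter> B \<subseteq> V" using AV by blast
  have thk: "theta V E (A \<inter> B) = k" using h by simp
  obtain C where C: "finite C" "card C = k" "\<forall>K\<in>C. clique V E K \<and> K \<subseteq> A \<inter> B" "\<Union>C = A \<inter> B"
    using theta_cover[OF g ABV] unfolding thk by blast
  define T where "T K = {X \<in> cq_V V E. X \<inter> K \<noteq> {}}" for K
  define m where "m K = (SOME K'. max_clique V E K' \<and> K \<subseteq> K')" for K
  have m: "max_clique V E (m K) \<and> K \<subseteq> m K" if "K \<in> C" for K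
    unfolding m_def by (rule someI_ex, rule ex_max_clique[OF g]) (use C that in auto)
  have sub: "cq_tilde V E A \<inter> cq_tilde V E B \<subseteq> (\<Union>K\<in>C. T (m K))"
  proof
    fix P assume P: "P \<in> cq_tilde V E A \<inter> cq_tilde V E B"
    obtain p where p: "p \<in> V" "P = cq_class V E p" using P by (auto simp: cq_tilde_def cq_V_def)
    obtain a where a: "a \<in> P" "a \<in> A" using P by (auto simp: cq_tilde_def)
    obtain b where b: "b \<in> P" "b \<in> B" using P by (auto simp: cq_tilde_def)
    have "\<exists>c\<in>P. c \<in> A \<inter> B"
    proof (cases "a \<in> B \<or> b \<in> A")
      case True thus ?thesis using a b by auto
    next
      case False
      have "cq_equiv V E a b" using class_equiv_mem a b p by metis
      moreover have "a \<noteq> b" using False b by auto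
      ultimately have "E a b" using equiv_adj[OF g] by blast
      thus ?thesis using sep a b False by auto
    qed
    then obtain c K where c: "c \<in> P" "K \<in> C" "c \<in> K" using C(4) by blast
    have "c \<in> m K" using m[OF c(2)] c by auto
    moreover have "P \<in> cq_V V E" using P by (auto simp: cq_tilde_def)
    ultimately show "P \<in> (\<Union>K\<in>C. T (m K))" using c unfolding T_def by blast
  qed
  have "(\<Union>K\<in>C. T (m K)) \<subseteq> cq_V V E" by (auto simp: T_def)
  hence "card (cq_tilde V E A \<inter> cq_tilde V E B) \<le> card (\<Union>K\<in>C. T (m K))"
    using sub fcq by (meson card_mono finite_subset)
  also have "\<dots> \<le> (\<Sum>K\<in>C. card (T (m K)))" by (rule card_UN_le[OF C(1)])
  also have "\<dots> \<le> (\<Sum>K\<in>C. omega_tilde V E)"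
  proof (rule sum_mono)
    fix K assume K: "K \<in> C"
    have fin: "finite {card {X \<in> cq_V V E. X \<inter> K \<noteq> {}} | K. max_clique V E K}"
    proof -
      have "{K. max_clique V E K} \<subseteq> Pow V" by (auto simp: max_clique_def clique_def)
      hence "finite {K. max_clique V E K}" using fV by (meson finite_Pow_iff finite_subset)
      thus ?thesis by (simp add: setcompr_eq_image)
    qed
    show "card (T (m K)) \<le> omega_tilde V E"
      unfolding omega_tilde_def T_def by (rule Max_ge[OF fin]) (use m[OF K] in blast)
  qed
  also have "\<dots> = k * omega_tilde V E" using C(2) by simp
  finally show "card (cq_tilde V E A \<inter> cq_tilde V E B) \<le> k * omega_tilde V E" .
next
  have g: "graph V E" by fact
  fix X Y assume h: "separation (cq_V V E) (cq_E V E) X Y \<and> card (X \<inter> Y) = k"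
  have XV: "X \<subseteq> cq_V V E" and YV: "Y \<subseteq> cq_V V E"
    and sep: "\<forall>x\<in>X - Y. \<forall>y\<in>Y - X. \<not> cq_E V E x y"
    using h by (auto simp: separation_def)
  have UV: "\<Union>Z \<subseteq> V" if "Z \<subseteq> cq_V V E" for Z using that class_sub by (fastforce simp: cq_V_def)
  have disj: "P = Q" if "P \<in> cq_V V E" "Q \<in> cq_V V E" "u \<in> P" "u \<in> Q" for P Q u
    using that class_eq by (metis cq_V_def imageE)
  show "separation V E (\<Union>X) (\<Union>Y)"
    unfolding separation_def
  proof (intro conjI ballI)
    show "\<Union>X \<subseteq> V" "\<Union>Y \<subseteq> V" using UV XV YV by auto
    fix x y assume x: "x \<in> \<Union>X - \<Union>Y" and y: "y \<in> \<Union>Y - \<Union>X"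
    then obtain P Q where PQ: "P \<in> X" "x \<in> P" "Q \<in> Y" "y \<in> Q" by auto
    have "P \<notin> Y" "Q \<notin> X" using x y PQ by auto
    hence "P \<noteq> Q" using PQ by auto
    show "\<not> E x y"
    proof
      assume "E x y"
      hence "cq_E V E P Q" using PQ XV YV \<open>P \<noteq> Q\<close> by (auto simp: cq_E_def)
      thus False using sep PQ \<open>P \<notin> Y\<close> \<open>Q \<notin> X\<close> by auto
    qed
  qed
  have eq: "\<Union>X \<inter> \<Union>Y = \<Union>(X \<inter> Y)"
  proof
    show "\<Union>X \<inter> \<Union>Y \<subseteq> \<Union>(X \<inter> Y)"
    proof
      fix u assume "u \<in> \<Union>X \<inter> \<Union>Y"
      then obtain P Q where "P \<in> X" "Q \<in> Y" "u \<in> P" "u \<in> Q" by auto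
      moreover hence "P = Q" using disj XV YV by blast
      ultimately show "u \<in> \<Union>(X \<inter> Y)" by auto
    qed
  qed auto
  have "card (X \<inter> Y) \<noteq> 0" using h assms(2) by simp
  hence fin: "finite (X \<inter> Y)" by (meson card.infinite)
  have "\<exists>C. finite C \<and> card C = k \<and> (\<forall>K\<in>C. clique V E K \<and> K \<subseteq> \<Union>X \<inter> \<Union>Y) \<and> \<Union>C = \<Union>X \<inter> \<Union>Y"
  proof (rule exI[of _ "X \<inter> Y"], intro conjI)
    show "\<forall>K\<in>X \<inter> Y. clique V E K \<and> K \<subseteq> \<Union>X \<inter> \<Union>Y"
      using XV class_clique[OF g] by (auto simp: cq_V_def)
  qed (use fin h eq in auto)
  thus "theta V E (\<Union>X \<inter> \<Union>Y) \<le> k" unfolding theta_def by (rule Least_le)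
qed

end
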